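(* For every integer $n>7$, $F_n\ge 3$.
   Context: Define maps $G,S:\mathbb Z^2\to\mathbb Z^2$ by $G(x,y)=(x+y,y)$ and $S(x,y)=(3x-2y+1,\,2x-y+1)$. Define the array $(F_{n,k})_{n,k\ge 0}$ by $F_{0,0}=1$ and, for $(n,k)\neq(0,0)$, $F_{n,k}$ is the number of finite words $w=w_1w_2\cdots w_m$ ($m\ge 0$) over the alphabet $\{G,S\}$ with $w_1\circ w_2\circ\cdots\circ w_m(1,1)=(n,k)$ (the empty word acts as the identity). Equivalently: start with all entries $0$, set $F_{0,0}=1$ and $F_{1,1}=1$, and thereafter, whenever an entry $F_{n,k}$ with $n\ge 1$ changes its value, increase $F_{n+k,k}$ and $F_{3n+1-2k,\,2n+1-k}$ by $1$. Set $F_n=\sum_{k\ge0}F_{n,k}$ (a finite sum since $F_{n,k}=0$ for $k>n$). *)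

theory Defs
  imports Main
begin

datatype letter = LG | LS

fun mapG :: "int \<times> int \<Rightarrow> int \<times> int" where
  "mapG (x, y) = (x + y, y)"

fun mapS :: "int \<times> int \<Rightarrow> int \<times> int" where
  "mapS (x, y) = (3 * x - 2 * y + 1, 2 * x - y + 1)"

fun act :: "letter \<Rightarrow> int \<times> int \<Rightarrow> int \<times> int" where
  "act LG = mapG"
| "act LS = mapS"

definition word_eval :: "letter list \<Rightarrow> int \<times> int" where
  "word_eval w = foldr act w (1, 1)"

definition Fnk :: "nat \<Rightarrow> nat \<Rightarrow> nat" where
  "Fnk n k = (if n = 0 \<and> k = 0 then 1
              else card {w. word_eval w = (int n, int k)})"

definition Fn :: "nat \<Rightarrow> nat" where
  "Fn n = (\<Sum>k\<le>n. Fnk n k)"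

end

theory Submission
  imports Defs
begin

definition Q :: "nat \<Rightarrow> nat \<Rightarrow> bool" where
  "Q u y \<longleftrightarrow> (\<exists>w. word_eval w = (int (u + y), int y))"

lemma word_eval_Cons: "word_eval (l # w) = act l (word_eval w)"
  by (simp add: word_eval_def)

lemma Q01: "Q 0 1"
  unfolding Q_def by (rule exI[of _ "[]"]) (simp add: word_eval_def)

lemma QG: "Q u y \<Longrightarrow> Q (u + y) y"
  unfolding Q_def
proof -
  assume "\<exists>w. word_eval w = (int (u + y), int y)"
  then obtain w where "word_eval w = (int (u + y), int y)" by blast
  then have "word_eval (LG # w) = (int (u + y + y), int y)" by (simp add: word_eval_Cons)
  then show "\<exists>w. word_eval w = (int (u + y + y), int y)" by blast
qed

lemma QS: "Q u y \<Longrightarrow> Q u (y + 2*u + 1)"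
  unfolding Q_def
proof -
  assume "\<exists>w. word_eval w = (int (u + y), int y)"
  then obtain w where "word_eval w = (int (u + y), int y)" by blast
  then have "word_eval (LS # w) = (int (u + (y + 2*u + 1)), int (y + 2*u + 1))" by (simp add: word_eval_Cons algebra_simps)
  then show "\<exists>w. word_eval w = (int (u + (y + 2*u + 1)), int (y + 2*u + 1))" by blast
qed

lemma QGm: "Q u y \<Longrightarrow> Q (u + m*y) y"
proof (induction m)
  case 0 then show ?case by simp
next
  case (Suc m) then show ?case using QG[of "u + m*y" y] by (simp add: algebra_simps)
qed

lemma QSm: "Q u y \<Longrightarrow> Q u (y + m*(2*u+1))"
proof (induction m)
  case 0 then show ?case by simp
next
  case (Suc m) then show ?case using QS[of u "y + m*(2*u+1)"] by (simp add: algebra_simps)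
qed

lemma QGd: "Q u y \<Longrightarrow> u \<le> u' \<Longrightarrow> y dvd (u' - u) \<Longrightarrow> Q u' y"
  by (metis QGm dvdE le_add_diff_inverse mult.commute)

lemma QSd: "Q u y \<Longrightarrow> y \<le> y' \<Longrightarrow> (2*u+1) dvd (y' - y) \<Longrightarrow> Q u y'"
  by (metis QSm dvdE le_add_diff_inverse mult.commute)

lemma Q0y: "y \<ge> 1 \<Longrightarrow> Q 0 y"
  using QSd[OF Q01, of y] by simp

lemma Qu1: "Q u 1"
  using QGd[OF Q01, of u] by simp

lemma dvd_pow_minus1: "(x::nat) \<ge> 1 \<Longrightarrow> (x - 1) dvd (x^q - 1)"
proof (induction q)
  case 0 then show ?case by simp
next
  case (Suc q)
  have "x^Suc q - 1 = x * (x^q - 1) + (x - 1)"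
  proof -
    have "x^q \<ge> 1" using Suc.prems by simp
    then show ?thesis using Suc.prems by (simp add: algebra_simps right_diff_distrib')
  qed
  moreover have "(x - 1) dvd x * (x^q - 1) + (x - 1)"
    using Suc by (intro dvd_add dvd_mult) auto
  ultimately show ?case by simp
qed

lemma dvd2: "(2::nat)^u - 1 dvd 2^(u*q) - 1"
  using dvd_pow_minus1[of "2^u" q] by (simp add: power_mult)

lemma pow2_ge2: "u \<ge> 1 \<Longrightarrow> (2::nat)^u \<ge> 2"
  by (cases u) auto

lemma two_pow_aux: "t \<ge> 1 \<Longrightarrow> 2 * (2^(t-1) - 1) + 1 = (2::nat)^t - 1"
proof -
  assume "t \<ge> 1"
  then obtain m where m: "t = Suc m" by (cases t) auto
  obtain K where K: "(2::nat)^m = Suc K" using not0_implies_Suc[of "(2::nat)^m"] by auto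
  show ?thesis using m K by simp
qed

lemma M: "coprime t u \<Longrightarrow> t \<ge> 1 \<Longrightarrow> u \<ge> 1 \<Longrightarrow> Q (2^(t-1) - 1) (2^u - 1)"
proof (induction "t+u" arbitrary: t u rule: less_induct)
  case less
  show ?case
  proof (cases "t = 1")
    case True
    have "(2::nat)^u \<ge> 2" using pow2_ge2 less.prems(3) by blast
    then show ?thesis using Q0y[of "2^u - 1"] True by simp
  next
    case t1: False
    show ?thesis
    proof (cases "u = 1")
      case True
      then show ?thesis using Qu1 by simp
    next
      case u1: False
      show ?thesis
      proof (cases "t > u")
        case True
        define t' where "t' = (t-1) mod u + 1"
        define q where "q = (t-1) div u"
        have tq: "t - 1 = q*u + (t'-1)" unfolding t'_def q_def by simp
        have "(t-1) mod u < u" using less.prems by simp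
        then have "t' \<le> u" unfolding t'_def by simp
        have tm: "t' mod u = t mod u"
        proof -
          have "((t-1) mod u + 1) mod u = ((t-1) + 1) mod u" by (rule mod_add_left_eq)
          then show ?thesis using less.prems unfolding t'_def by simp
        qed
        have cop: "coprime t' u"
          using coprime_mod_left_iff[of u t'] coprime_mod_left_iff[of u t] tm less.prems by simp
        have "t' \<noteq> u" using cop u1 by auto
        with \<open>t' \<le> u\<close> have "t' < u" by simp
        then have IH: "Q (2^(t'-1) - 1) (2^u - 1)"
          using less.hyps[of t' u] cop less.prems True unfolding t'_def by simp
        have e: "(2::nat)^(t-1) = 2^(t'-1) * 2^(u*q)"
          using tq by (simp add: power_add mult.commute)
        have le: "(2::nat)^(t'-1) - 1 \<le> 2^(t-1) - 1"
          using tq by (simp add: diff_le_mono)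
        have "(2::nat)^(t-1) - 1 - (2^(t'-1) - 1) = 2^(t'-1) * (2^(u*q) - 1)"
          using e by (simp add: right_diff_distrib')
        then have "(2::nat)^u - 1 dvd (2^(t-1) - 1 - (2^(t'-1) - 1))"
          using dvd2[of u q] by simp
        then show ?thesis using QGd[OF IH le] by simp
      next
        case False
        have "t \<noteq> u" using less.prems(1) t1 by auto
        then have ut: "u > t" using False by simp
        define u' where "u' = u mod t"
        define q where "q = u div t"
        have uq: "u = q*t + u'" unfolding u'_def q_def by simp
        have cop: "coprime t u'"
          using less.prems unfolding u'_def by simp
        have "u' \<noteq> 0"
        proof
          assume "u' = 0"
          then have "coprime t 0" using cop by simp
          then have "t = 1" by simp
          then show False using t1 by simp
        qed
        have "u' < t" unfolding u'_def using less.prems by simp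
        then have IH: "Q (2^(t-1) - 1) (2^u' - 1)"
          using less.hyps[of t u'] cop less.prems ut \<open>u' \<noteq> 0\<close> by simp
        have e: "(2::nat)^u = 2^u' * 2^(t*q)"
          using uq by (simp add: power_add mult.commute)
        have le: "(2::nat)^u' - 1 \<le> 2^u - 1"
          using uq by (simp add: diff_le_mono)
        have "(2::nat)^u - 1 - (2^u' - 1) = 2^u' * (2^(t*q) - 1)"
          using e by (simp add: right_diff_distrib')
        moreover have "2 * (2^(t-1) - 1) + 1 = (2::nat)^t - 1"
          using less.prems(2) by (rule two_pow_aux)
        ultimately have "2 * (2^(t-1) - 1) + 1 dvd ((2::nat)^u - 1 - (2^u' - 1))"
          using dvd2[of t q] by simp
        then show ?thesis using QSd[OF IH le] by simp
      qed
    qed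
  qed
qed

lemma eval_bound: "word_eval w = (x, y) \<Longrightarrow> 1 \<le> y \<and> y \<le> x \<and> int (length w) + 1 \<le> x"
proof (induction w arbitrary: x y)
  case Nil then show ?case by (simp add: word_eval_def)
next
  case (Cons l w)
  obtain x0 y0 where e: "word_eval w = (x0, y0)" by fastforce
  from Cons.IH[OF e] have h: "1 \<le> y0" "y0 \<le> x0" "int (length w) + 1 \<le> x0" by auto
  show ?case
  proof (cases l)
    case LG
    then have "word_eval (l # w) = (x0 + y0, y0)" using e by (simp add: word_eval_Cons)
    then have "x = x0 + y0" "y = y0" using Cons.prems by auto
    then show ?thesis using h by simp
  next
    case LS
    then have "word_eval (l # w) = (3*x0 - 2*y0 + 1, 2*x0 - y0 + 1)" using e by (simp add: word_eval_Cons)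
    then have "x = 3*x0 - 2*y0 + 1" "y = 2*x0 - y0 + 1" using Cons.prems by auto
    then show ?thesis using h by simp
  qed
qed

lemma letter_in: "l \<in> {LG, LS}"
  by (cases l) auto

lemma Q_Fnk: assumes "Q u y" "u + y \<ge> 1" shows "Fnk (u + y) y \<ge> 1"
proof -
  let ?S = "{w. word_eval w = (int (u + y), int y)}"
  have sub: "?S \<subseteq> {w. set w \<subseteq> {LG, LS} \<and> length w \<le> u + y}"
  proof
    fix w assume "w \<in> ?S"
    then have "int (length w) + 1 \<le> int (u + y)" using eval_bound[of w] by auto
    moreover have "set w \<subseteq> {LG, LS}" using letter_in by blast
    ultimately show "w \<in> {w. set w \<subseteq> {LG, LS} \<and> length w \<le> u + y}" by auto
  qed
  have "finite ?S"
    by (rule finite_subset[OF sub finite_lists_length_le]) simp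
  moreover have "?S \<noteq> {}" using assms(1) unfolding Q_def by auto
  ultimately have "card ?S \<ge> 1" by (simp add: Suc_leI card_gt_0_iff)
  then show ?thesis using assms(2) unfolding Fnk_def by simp
qed

lemma Q_Fnk': "Q (n - k) k \<Longrightarrow> k \<le> n \<Longrightarrow> 1 \<le> k \<Longrightarrow> Fnk n k \<ge> 1"
  using Q_Fnk[of "n - k" k] by simp

lemma three: assumes "1 < k" "k < n" "Q (n - k) k" shows "Fn n \<ge> 3"
proof -
  have a: "Fnk n 1 \<ge> 1" using Q_Fnk'[OF Qu1, of n] assms by simp
  have "Q 0 n" using Q0y[of n] assms by simp
  then have b: "Fnk n n \<ge> 1" using Q_Fnk'[of n n] assms by simp
  have c: "Fnk n k \<ge> 1" using Q_Fnk'[OF assms(3)] assms by simp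
  have "Fnk n 1 + Fnk n k + Fnk n n = sum (Fnk n) {1, k, n}" using assms by simp
  also have "\<dots> \<le> sum (Fnk n) {..n}" using assms by (intro sum_mono2) auto
  finally show ?thesis using a b c unfolding Fn_def by simp
qed

lemma odd_div: "(m::nat) \<ge> 1 \<Longrightarrow> (\<exists>a. m = 2^a) \<or> (\<exists>v. odd v \<and> v \<ge> 3 \<and> v dvd m)"
proof (induction m rule: less_induct)
  case (less m)
  show ?case
  proof (cases "even m")
    case True
    then obtain m' where m': "m = 2*m'" by (rule evenE)
    have "m' < m" "m' \<ge> 1" using less.prems m' by linarith+
    from less.IH[OF this] show ?thesis
    proof
      assume "\<exists>a. m' = 2^a" then obtain a where "m' = 2^a" by blast
      then have "m = 2^Suc a" using m' by simp
      then show ?thesis by (intro disjI1 exI[of _ "Suc a"])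
    next
      assume "\<exists>v. odd v \<and> v \<ge> 3 \<and> v dvd m'"
      then obtain v where "odd v" "v \<ge> 3" "v dvd m'" by blast
      moreover have "m' dvd m" using m' by simp
      ultimately have "odd v \<and> v \<ge> 3 \<and> v dvd m" using dvd_trans by blast
      then show ?thesis by (intro disjI2 exI[of _ v])
    qed
  next
    case False
    show ?thesis
    proof (cases "m = 1")
      case True then show ?thesis by (intro disjI1 exI[of _ 0]) simp
    next
      case f: False
      have "m \<noteq> 2" using False by auto
      then have "m \<ge> 3" using f less.prems by linarith
      then show ?thesis using False by (intro disjI2 exI[of _ m]) simp
    qed
  qed
qed

lemma cop2: "odd (m::nat) \<Longrightarrow> m \<ge> 3 \<Longrightarrow> coprime m (m+2)"
proof -
  assume "odd m" "m \<ge> 3"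
  have "(m+2) mod m = 2 mod m" by (metis add.commute mod_add_self2)
  also have "\<dots> = 2" using \<open>m \<ge> 3\<close> by simp
  finally have "(m+2) mod m = 2" .
  then show ?thesis using coprime_mod_right_iff[of m "m+2"] \<open>odd m\<close> \<open>m \<ge> 3\<close> by simp
qed

lemma mersenne: fixes a :: nat assumes "a \<ge> 4" "a \<noteq> 5" shows "\<exists>j. 2 \<le> j \<and> j < a \<and> coprime (a+1) j"
proof (cases "even a")
  case True
  have "coprime (a - 1) (a - 1 + 2)" using cop2[of "a-1"] True assms by simp
  moreover have "a - 1 + 2 = a + 1" using assms by simp
  ultimately have "coprime (a+1) (a-1)" by (simp add: coprime_commute)
  then show ?thesis using assms by (intro exI[of _ "a-1"]) auto
next
  case False
  then obtain b where "a = 2*b + 1" by (metis oddE)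
  then obtain m where m: "a + 1 = 2*m" by (intro that[of "b+1"]) simp
  have "m \<ge> 4" using m assms False by presburger
  show ?thesis
  proof (cases "even m")
    case True
    have "coprime (2*m) (m+1)" using True by (simp add: coprime_commute)
    then show ?thesis using m \<open>m \<ge> 4\<close> by (intro exI[of _ "m+1"]) auto
  next
    case mo: False
    have "m \<ge> 5" using mo \<open>m \<ge> 4\<close> by presburger
    have "coprime (2*m) (m+2)" using mo cop2[of m] \<open>m \<ge> 5\<close> by simp
    then show ?thesis using m \<open>m \<ge> 5\<close> by (intro exI[of _ "m+2"]) auto
  qed
qed

lemma Q31: "Q 21 10"
proof -
  have "Q 1 1" using QGd[OF Q01, of 1] by simp
  then have "Q 1 10" using QSd[of 1 1 10] by simp
  then show ?thesis using QGd[of 1 10 21] by simp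
qed

lemma mers_Q: assumes "2 \<le> j" "j < a" "coprime (a+1) j"
  shows "Q (2^a - 2^j) (2^j - 1)"
proof -
  define s where "s = a mod j"
  define q where "q = a div j"
  have aq: "a = j*q + s" unfolding s_def q_def by simp
  have "q \<ge> 1" unfolding q_def using assms div_greater_zero_iff[of a j] by simp
  have "(a+1) mod j = (s+1) mod j" unfolding s_def by (rule mod_add_left_eq[symmetric])
  then have "coprime (s+1) j"
    using coprime_mod_left_iff[of j "s+1"] coprime_mod_left_iff[of j "a+1"] assms by simp
  then have base: "Q (2^s - 1) (2^j - 1)" using M[of "s+1" j] assms by simp
  obtain S where S: "(2::nat)^s = Suc S" using not0_implies_Suc[of "(2::nat)^s"] by auto
  obtain J where J: "(2::nat)^j = Suc J" using not0_implies_Suc[of "(2::nat)^j"] by auto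
  define P where "P = (2::nat)^(j*q)"
  have PJ: "P \<ge> 2^j" unfolding P_def using \<open>q \<ge> 1\<close> by (intro power_increasing) auto
  have A: "(2::nat)^a = 2^s * P" unfolding P_def using aq by (simp add: power_add)
  have SJ: "Suc S * Suc J \<ge> Suc S + J" by simp
  have "Suc S * P \<ge> Suc S * Suc J" using PJ J by (intro mult_le_mono2) simp
  then have le: "2^s - 1 \<le> (2::nat)^a - 2^j" using A S J SJ by simp
  have eq: "(2::nat)^a - 2^j - (2^s - 1) = 2^s * (P - 1) - (2^j - 1)"
    using A S J SJ \<open>Suc S * P \<ge> Suc S * Suc J\<close> by (simp add: right_diff_distrib')
  have "(2::nat)^j - 1 dvd 2^s * (P - 1)" unfolding P_def using dvd2[of j q] by simp
  then have "(2::nat)^j - 1 dvd 2^s * (P - 1) - (2^j - 1)" by (rule dvd_diff_nat[OF _ dvd_refl])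
  then have "(2::nat)^j - 1 dvd 2^a - 2^j - (2^s - 1)" unfolding eq .
  then show ?thesis using QGd[OF base le] by simp
qed

theorem theorem12:
  fixes n :: nat
  assumes "n > 7"
  shows "Fn n \<ge> 3"
proof (cases "even n")
  case True
  then obtain h where h: "n = 2*h" by (rule evenE)
  have "Q 0 2" using Q0y[of 2] by simp
  then have "Q (n - 2) 2" using QGd[of 0 2 "n-2"] h assms by (simp add: right_diff_distrib')
  then show ?thesis using three[of 2 n] assms by simp
next
  case odd: False
  have "n + 1 \<ge> 1" by simp
  from odd_div[OF this] show ?thesis
  proof
    assume "\<exists>a. n + 1 = 2^a"
    then obtain a where a: "n + 1 = 2^a" by blast
    have "a \<ge> 4"
    proof (rule ccontr)
      assume "\<not> a \<ge> 4"
      then have "a \<le> 3" by simp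
      then have "(2::nat)^a \<le> 2^3" by (intro power_increasing) auto
      then show False using a assms by simp
    qed
    show ?thesis
    proof (cases "a = 5")
      case True
      then have "n = 31" using a by simp
      then show ?thesis using three[of 10 31] Q31 by simp
    next
      case False
      obtain j where j: "2 \<le> j" "j < a" "coprime (a+1) j" using mersenne[OF \<open>a \<ge> 4\<close> False] by blast
      have Qj: "Q (2^a - 2^j) (2^j - 1)" using mers_Q[OF j] .
      have "(2::nat)^j \<ge> 2^2" using j by (intro power_increasing) auto
      then have j4: "(2::nat)^j \<ge> 4" by simp
      have "(2::nat)^j < 2^a" using j by (intro power_strict_increasing) auto
      then have k1: "1 < (2::nat)^j - 1" and k2: "(2::nat)^j - 1 < n" using a j4 by linarith+
      have "n - (2^j - 1) = 2^a - 2^j" using a \<open>(2::nat)^j < 2^a\<close> \<open>(2::nat)^j \<ge> 2^2\<close> by simp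
      then show ?thesis using three[OF k1 k2] Qj by simp
    qed
  next
    assume "\<exists>v. odd v \<and> v \<ge> 3 \<and> v dvd n + 1"
    then obtain v where v: "odd v" "v \<ge> 3" "v dvd n + 1" by blast
    from v(3) obtain t where t: "n + 1 = v * t" by (rule dvdE)
    obtain r where r: "v = 2*r + 1" using v(1) by (rule oddE)
    have "r \<ge> 1" using r v by simp
    have "even (n+1)" using odd by simp
    then have "even (v*t)" unfolding t .
    then have "even t" using v(1) by simp
    have "t \<noteq> 0"
    proof
      assume "t = 0" then have "n + 1 = 0" using t by simp
      then show False by simp
    qed
    with \<open>even t\<close> have "t \<ge> 2" by presburger
    then obtain t' where t': "t = t' + 2" using le_Suc_ex by (metis add.commute)
    have n_eq: "n = r + r + (t'+1) * (2*r+1)" using t t' r by (simp add: algebra_simps)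
    have "Q 0 r" using Q0y \<open>r \<ge> 1\<close> by simp
    then have "Q r r" using QGd[of 0 r r] by simp
    moreover have "n - r - r = (t'+1)*(2*r+1)" using n_eq by simp
    then have "(2*r+1) dvd (n - r - r)" by (metis dvd_triv_right)
    moreover have "r \<le> n - r" using n_eq by simp
    ultimately have Qk: "Q r (n - r)" using QSd[of r r "n - r"] by blast
    have "n - (n - r) = r" using n_eq by simp
    moreover have "1 < n - r" using n_eq \<open>r \<ge> 1\<close> by simp
    moreover have "n - r < n" using n_eq \<open>r \<ge> 1\<close> by simp
    ultimately show ?thesis using three[of "n - r" n] Qk by simp
  qed
qed

end
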